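(* Let $s\ge 2$. As $z\to\infty$, $$\sum_{\omega\in\Omega_z}P(E_\omega)\sim \lambda_s,\qquad \lambda_s=\frac{\Gamma^s(1/s)}{s!\,s^s}.$$
   Context: Let $A\subseteq\{1,2,\dots\}$ be a random set in which the events $\{n\in A\}$ are mutually independent with $P(n\in A)=\frac1s n^{-1+1/s}$. For a finite set $\omega$ of distinct positive integers, $E_\omega$ is the event $\{\omega\subseteq A\}$ (so $P(E_\omega)=\prod_{x\in\omega}\frac1s x^{-1+1/s}$). For $\omega=\{x_1,\dots,x_r\}$ define $\sigma(\omega)=\{a_1x_1+\cdots+a_rx_r: a_1+\cdots+a_r=s,\ a_i\ge1 \text{ integers}\}$, the integers expressible as a sum of $s$ integers using each of $x_1,\dots,x_r$ at least once. For an integer $z$, $\Omega_z=\{\omega: z\in\sigma(\omega)\}$. $\Gamma$ is Euler's Gamma function. *)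

theory Defs
  imports "HOL-Analysis.Analysis" "HOL-Library.Landau_Symbols"
begin

definition sigma :: "nat \<Rightarrow> nat set \<Rightarrow> nat set" where
  "sigma s w = {z. \<exists>a :: nat \<Rightarrow> nat. (\<forall>x\<in>w. a x \<ge> 1) \<and> (\<Sum>x\<in>w. a x) = s
                     \<and> z = (\<Sum>x\<in>w. a x * x)}"

definition Omega :: "nat \<Rightarrow> nat \<Rightarrow> nat set set" where
  "Omega s z = {w. finite w \<and> 0 \<notin> w \<and> z \<in> sigma s w}"

definition PE :: "nat \<Rightarrow> nat set \<Rightarrow> real" where
  "PE s w = (\<Prod>x\<in>w. (1 / real s) * real x powr (-1 + 1 / real s))"

definition lambda_s :: "nat \<Rightarrow> real" where
  "lambda_s s = Gamma (1 / real s) ^ s / (fact s * real s ^ s)"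

end

theory Submission
  imports Defs "HOL-Combinatorics.Multiset_Permutations"
begin

definition Bf :: "real \<Rightarrow> real \<Rightarrow> real \<Rightarrow> real" where
  "Bf a b t = t powr (a - 1) * (1 - t) powr (b - 1)"

lemma Bf_conv:
  assumes "0 < a" "a \<le> 1" "0 < b" "b \<le> 1" "0 < x" "x < 1" "0 < y" "y < 1" "0 \<le> t" "t \<le> 1"
  shows "Bf a b ((1 - t) * x + t * y) \<le> (1 - t) * Bf a b x + t * Bf a b y"
proof -
  define m where "m = (1 - t) * x + t * y"
  have m0: "0 < m" unfolding m_def using assms
    by (smt (verit) mult_nonneg_nonneg mult_pos_pos)
  have m1: "m < 1"
  proof (cases "t = 1")
    case True thus ?thesis using assms by (simp add: m_def)
  next
    case False
    have "(1-t)*x < (1-t)*1" using assms False by (intro mult_strict_left_mono) auto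
    moreover have "t*y \<le> t*1" using assms by (intro mult_left_mono) auto
    ultimately show ?thesis by (simp add: m_def)
  qed
  have l1: "ln m \<ge> (1 - t) * ln x + t * ln y"
    using concave_onD[OF ln_concave, of t x y] assms by (simp add: m_def)
  have "1 - m = (1 - t) * (1 - x) + t * (1 - y)" unfolding m_def by (simp add: algebra_simps)
  hence l2: "ln (1 - m) \<ge> (1 - t) * ln (1 - x) + t * ln (1 - y)"
    using concave_onD[OF ln_concave, of t "1-x" "1-y"] assms by simp
  define phi where "phi p = (a - 1) * ln p + (b - 1) * ln (1 - p)" for p
  have Bfe: "Bf a b p = exp (phi p)" if "0 < p" "p < 1" for p
    using that by (simp add: Bf_def phi_def powr_def exp_add)
  have "(a - 1) * ln m \<le> (a - 1) * ((1 - t) * ln x + t * ln y)"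
    using l1 assms by (intro mult_left_mono_neg) auto
  moreover have "(b - 1) * ln (1 - m) \<le> (b - 1) * ((1 - t) * ln (1 - x) + t * ln (1 - y))"
    using l2 assms by (intro mult_left_mono_neg) auto
  ultimately have "phi m \<le> (1 - t) * phi x + t * phi y"
    unfolding phi_def by (simp add: algebra_simps)
  hence "exp (phi m) \<le> exp ((1 - t) * phi x + t * phi y)" by simp
  also have "\<dots> \<le> (1 - t) * exp (phi x) + t * exp (phi y)"
    using convex_onD[OF exp_convex, of t "phi x" "phi y"] assms by simp
  finally show ?thesis using Bfe m0 m1 assms unfolding m_def by simp
qed

lemma refl_has_int:
  assumes "(f has_integral I) {u..v::real}"
  shows "((\<lambda>t. f (u + v - t)) has_integral I) {u..v}"
proof -
  have "((f \<circ> ((+) (u+v))) has_integral I) {-v..-u}"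
    using assms has_integral_shift_Icc_real[of f "u+v" I "-v" "-u"] by simp
  hence "((\<lambda>x. (f \<circ> ((+) (u+v))) (-x)) has_integral I) {- (-u)..- (-v)}"
    by (subst has_integral_reflect_real) simp
  thus ?thesis by (simp add: o_def algebra_simps)
qed

lemma mid_le:
  fixes f :: "real \<Rightarrow> real"
  assumes "f integrable_on {u..v}" "u \<le> v"
    and "\<And>t. t \<in> {u..v} \<Longrightarrow> 2 * f ((u+v)/2) \<le> f t + f (u + v - t)"
  shows "(v - u) * f ((u+v)/2) \<le> integral {u..v} f"
proof -
  have h1: "((\<lambda>t. f (u + v - t)) has_integral integral {u..v} f) {u..v}"
    by (rule refl_has_int) (use assms in auto)
  have h2: "((\<lambda>t. f t + f (u + v - t)) has_integral (integral {u..v} f + integral {u..v} f)) {u..v}"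
    by (intro has_integral_add h1) (use assms in auto)
  have h3: "((\<lambda>t. 2 * f ((u+v)/2)) has_integral ((v - u) * (2 * f ((u+v)/2)))) {u..v}"
    using has_integral_const_real[of "2 * f ((u+v)/2)" u v] assms by simp
  have "(v - u) * (2 * f ((u+v)/2)) \<le> integral {u..v} f + integral {u..v} f"
    by (rule has_integral_le[OF h3 h2]) (use assms in auto)
  thus ?thesis by simp
qed

lemma trap_le:
  fixes f :: "real \<Rightarrow> real"
  assumes "f integrable_on {u..v}" "u \<le> v"
    and "\<And>t. t \<in> {u..v} \<Longrightarrow> f t + f (u + v - t) \<le> f u + f v"
  shows "integral {u..v} f \<le> (v - u) * (f u + f v) / 2"
proof -
  have h1: "((\<lambda>t. f (u + v - t)) has_integral integral {u..v} f) {u..v}"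
    by (rule refl_has_int) (use assms in auto)
  have h2: "((\<lambda>t. f t + f (u + v - t)) has_integral (integral {u..v} f + integral {u..v} f)) {u..v}"
    by (intro has_integral_add h1) (use assms in auto)
  have h3: "((\<lambda>t. f u + f v) has_integral ((v - u) * (f u + f v))) {u..v}"
    using has_integral_const_real[of "f u + f v" u v] assms by simp
  have "integral {u..v} f + integral {u..v} f \<le> (v - u) * (f u + f v)"
    by (rule has_integral_le[OF h2 h3]) (use assms in auto)
  thus ?thesis by simp
qed

lemma Bf_mid_cond:
  assumes "0 < a" "a \<le> 1" "0 < b" "b \<le> 1" "0 < u" "v < 1" "t \<in> {u..v}"
  shows "2 * Bf a b ((u+v)/2) \<le> Bf a b t + Bf a b (u + v - t)"
proof -
  have "Bf a b ((1 - 1/2) * t + (1/2) * (u + v - t)) \<le> (1 - 1/2) * Bf a b t + (1/2) * Bf a b (u + v - t)"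
    by (rule Bf_conv) (use assms in auto)
  moreover have "(1 - 1/2) * t + (1/2) * (u + v - t) = (u+v)/2" by (simp add: field_simps)
  ultimately have "Bf a b ((u+v)/2) \<le> (1 - 1/2) * Bf a b t + (1/2) * Bf a b (u + v - t)" by metis
  thus ?thesis by simp
qed

lemma Bf_trap_cond:
  assumes "0 < a" "a \<le> 1" "0 < b" "b \<le> 1" "0 < u" "v < 1" "u < v" "t \<in> {u..v}"
  shows "Bf a b t + Bf a b (u + v - t) \<le> Bf a b u + Bf a b v"
proof -
  define l where "l = (t - u) / (v - u)"
  have l0: "0 \<le> l" "l \<le> 1" using assms by (auto simp: l_def field_simps)
  have lv: "l * (v - u) = t - u" using assms by (simp add: l_def)
  have e1: "t = (1 - l) * u + l * v" using lv by (simp add: algebra_simps)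
  have e2: "u + v - t = (1 - (1 - l)) * u + (1 - l) * v" using lv by (simp add: algebra_simps)
  have h1: "Bf a b ((1 - l) * u + l * v) \<le> (1 - l) * Bf a b u + l * Bf a b v"
    by (rule Bf_conv) (use assms l0 in auto)
  have h2: "Bf a b ((1 - (1 - l)) * u + (1 - l) * v) \<le> (1 - (1 - l)) * Bf a b u + (1 - l) * Bf a b v"
    by (rule Bf_conv) (use assms l0 in auto)
  have h1': "Bf a b t \<le> (1 - l) * Bf a b u + l * Bf a b v" using h1 by (simp only: e1[symmetric])
  have h2': "Bf a b (u + v - t) \<le> (1 - (1 - l)) * Bf a b u + (1 - l) * Bf a b v"
    using h2 by (simp only: e2[symmetric])
  show ?thesis using h1' h2' by (simp add: algebra_simps)
qed

lemma Bf_nonneg: "Bf a b t \<ge> 0"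
  by (simp add: Bf_def)

lemma Bf_int: "0 < a \<Longrightarrow> 0 < b \<Longrightarrow> Bf a b integrable_on {0..1}"
  unfolding Bf_def[abs_def] by (rule integrable_Beta') auto

lemma Bf_has_int: "0 < a \<Longrightarrow> 0 < b \<Longrightarrow> (Bf a b has_integral Beta a b) {0..1}"
  unfolding Bf_def[abs_def] by (rule has_integral_Beta_real) auto

lemma cells_sum:
  fixes f :: "real \<Rightarrow> real" and m n :: nat
  assumes "f integrable_on {u + real m*h .. u + real n*h}" "m \<le> n" "h \<ge> 0"
  shows "integral {u + real m*h .. u + real n*h} f = (\<Sum>k\<in>{m..<n}. integral {u + real k*h .. u + real (k+1)*h} f)"
  using assms
proof (induction n)
  case 0 thus ?case by simp
next
  case (Suc n)
  show ?case
  proof (cases "m = Suc n")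
    case True thus ?thesis by simp
  next
    case False
    hence mn: "m \<le> n" using Suc by simp
    have le1: "u + real m*h \<le> u + real n*h" using mn Suc.prems by (intro add_left_mono mult_right_mono) auto
    have le2: "u + real n*h \<le> u + Suc n * h" using Suc.prems by (intro add_left_mono mult_right_mono) auto
    have int1: "f integrable_on {u + real m*h .. u + real n*h}"
      by (rule integrable_subinterval_real[OF Suc.prems(1)]) (use le2 in auto)
    have "integral {u + real m*h .. u + real (Suc n)*h} f = integral {u + real m*h .. u + real n*h} f + integral {u + real n*h .. u + Suc n * h} f"
      using Henstock_Kurzweil_Integration.integral_combine[OF le1 le2 Suc.prems(1)] by simp
    also have "integral {u + real m*h .. u + real n*h} f = (\<Sum>k\<in>{m..<n}. integral {u + real k*h .. u + real (k+1)*h} f)"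
      using Suc.IH[OF int1 mn Suc.prems(3)] .
    finally show ?thesis using mn by (simp add: add.commute)
  qed
qed

lemma disc_term:
  assumes "1 \<le> x" "x < z"
  shows "real x powr (a-1) * real (z-x) powr (b-1) = real z powr (a+b-1) / real z * Bf a b (real x / real z)"
proof -
  define Z where "Z = real z"
  have Z: "Z > 0" using assms by (simp add: Z_def)
  have x: "real x > 0" using assms by simp
  have zx: "real (z - x) = Z * (1 - real x / Z)" using assms Z by (simp add: Z_def of_nat_diff field_simps)
  have "Bf a b (real x / Z) = (real x powr (a-1) / Z powr (a-1)) * ((1 - real x / Z) powr (b-1))"
    unfolding Bf_def by (simp add: powr_divide)
  moreover have "real (z-x) powr (b-1) = Z powr (b-1) * (1 - real x / Z) powr (b-1)"
    unfolding zx using assms Z by (subst powr_mult) (auto simp: Z_def)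
  moreover have "Z powr (a+b-1) / Z = Z powr (a-1) * Z powr (b-1)"
    using Z by (simp add: powr_add[symmetric] powr_diff)
  ultimately show ?thesis using Z unfolding Z_def[symmetric] by (simp add: field_simps)
qed

lemma disc_rewrite:
  assumes "1 \<le> z"
  shows "(\<Sum>x\<in>{1..<z}. real x powr (a-1) * real (z-x) powr (b-1)) / real z powr (a+b-1)
         = (1 / real z) * (\<Sum>x\<in>{1..<z}. Bf a b (real x / real z))"
proof -
  have "(\<Sum>x\<in>{1..<z}. real x powr (a-1) * real (z-x) powr (b-1))
        = (\<Sum>x\<in>{1..<z}. real z powr (a+b-1) / real z * Bf a b (real x / real z))"
    by (intro sum.cong refl disc_term) auto
  also have "\<dots> = real z powr (a+b-1) / real z * (\<Sum>x\<in>{1..<z}. Bf a b (real x / real z))"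
    by (simp add: sum_distrib_left)
  finally show ?thesis using assms by simp
qed

lemma disc_upper:
  assumes "0 < a" "a \<le> 1" "0 < b" "b \<le> 1" "1 \<le> z"
  shows "(1 / real z) * (\<Sum>x\<in>{1..<z}. Bf a b (real x / real z)) \<le> Beta a b"
proof -
  define Z where "Z = real z"
  have Z: "Z \<ge> 1" using assms by (simp add: Z_def)
  define u where "u = - 1 / (2 * Z)"
  define h where "h = 1 / Z"
  have int01: "Bf a b integrable_on {0..1}" using Bf_int assms by simp
  have sub: "{u + real 1 * h .. u + real z * h} \<subseteq> {0..1}"
    using Z by (auto simp: u_def h_def Z_def field_simps)
  have intI: "Bf a b integrable_on {u + real 1 * h .. u + real z * h}"
    by (rule integrable_subinterval_real[OF int01 sub])
  have cs: "integral {u + real 1 * h .. u + real z * h} (Bf a b) =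
      (\<Sum>k\<in>{1..<z}. integral {u + real k * h .. u + real (k+1) * h} (Bf a b))"
    by (rule cells_sum[OF intI]) (use assms Z in \<open>auto simp: h_def\<close>)
  have cell: "h * Bf a b (real k / Z) \<le> integral {u + real k * h .. u + real (k+1) * h} (Bf a b)"
    if k: "k \<in> {1..<z}" for k
  proof -
    have k1: "real k \<ge> 1" "real k + 1 \<le> Z" using k by (auto simp: Z_def)
    have lo: "0 < u + real k * h" using k1 Z by (simp add: u_def h_def field_simps)
    have hh: "u + real (k+1) * h = (real k + 1/2)/Z" using Z by (simp add: u_def h_def field_simps)
    have hi: "u + real (k+1) * h < 1" unfolding hh using k1 Z by simp
    have le: "u + real k * h \<le> u + real (k+1) * h" using Z by (simp add: h_def divide_right_mono)
    have mid: "(u + real k * h + (u + real (k+1) * h)) / 2 = real k / Z"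
      using Z by (simp add: u_def h_def field_simps)
    have len: "u + real (k+1) * h - (u + real k * h) = h" by (simp add: algebra_simps)
    have "(u + real (k+1) * h - (u + real k * h)) * Bf a b ((u + real k * h + (u + real (k+1) * h)) / 2)
          \<le> integral {u + real k * h .. u + real (k+1) * h} (Bf a b)"
      apply (rule mid_le)
        apply (rule integrable_subinterval_real[OF int01]) using lo hi apply auto[1]
       apply (rule le)
      apply (rule Bf_mid_cond) using assms lo hi apply auto
      done
    thus ?thesis unfolding mid len .
  qed
  have "(1 / real z) * (\<Sum>x\<in>{1..<z}. Bf a b (real x / real z)) = (\<Sum>k\<in>{1..<z}. h * Bf a b (real k / Z))"
    by (simp add: h_def Z_def sum_distrib_left)
  also have "\<dots> \<le> (\<Sum>k\<in>{1..<z}. integral {u + real k * h .. u + real (k+1) * h} (Bf a b))"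
    by (rule sum_mono) (rule cell)
  also have "\<dots> = integral {u + real 1 * h .. u + real z * h} (Bf a b)" using cs by simp
  also have "\<dots> \<le> integral {0..1} (Bf a b)"
    by (rule integral_subset_le[OF sub intI int01]) (simp add: Bf_nonneg)
  also have "\<dots> = Beta a b" using Bf_has_int assms by (simp add: integral_unique)
  finally show ?thesis .
qed

lemma disc_lower:
  assumes "0 < a" "a \<le> 1" "0 < b" "b \<le> 1" "2 \<le> z"
  shows "integral {1 / real z .. 1 - 1 / real z} (Bf a b) \<le> (1 / real z) * (\<Sum>x\<in>{1..<z}. Bf a b (real x / real z))"
proof -
  define Z where "Z = real z"
  have Z: "Z \<ge> 2" using assms by (simp add: Z_def)
  define h where "h = 1 / Z"
  have int01: "Bf a b integrable_on {0..1}" using Bf_int assms by simp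
  have e1: "0 + real 1 * h = 1 / real z" by (simp add: h_def Z_def)
  have e2: "0 + real (z - 1) * h = 1 - 1 / real z" using assms by (simp add: h_def Z_def of_nat_diff field_simps)
  have sub: "{1 / real z .. 1 - 1 / real z} \<subseteq> {0..1}" by auto
  have intI: "Bf a b integrable_on {0 + real 1 * h .. 0 + real (z-1) * h}"
    unfolding e1 e2 by (rule integrable_subinterval_real[OF int01 sub])
  have cs: "integral {0 + real 1 * h .. 0 + real (z-1) * h} (Bf a b) =
      (\<Sum>k\<in>{1..<z-1}. integral {0 + real k * h .. 0 + real (k+1) * h} (Bf a b))"
    by (rule cells_sum[OF intI]) (use assms Z in \<open>auto simp: h_def\<close>)
  have cell: "integral {0 + real k * h .. 0 + real (k+1) * h} (Bf a b) \<le> h * (Bf a b (real k / Z) + Bf a b (real (k+1) / Z)) / 2"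
    if k: "k \<in> {1..<z-1}" for k
  proof -
    have k1: "real k \<ge> 1" "real k + 2 \<le> Z" using k by (auto simp: Z_def)
    have lo: "0 < 0 + real k * h" using k1 Z by (simp add: h_def field_simps)
    have hi: "0 + real (k+1) * h < 1" using k1 Z by (simp add: h_def field_simps)
    have lt: "0 + real k * h < 0 + real (k+1) * h" using Z by (simp add: h_def divide_strict_right_mono)
    have len: "0 + real (k+1) * h - (0 + real k * h) = h" by (simp add: algebra_simps)
    have "integral {0 + real k * h .. 0 + real (k+1) * h} (Bf a b) \<le>
       (0 + real (k+1) * h - (0 + real k * h)) * (Bf a b (0 + real k * h) + Bf a b (0 + real (k+1) * h)) / 2"
      apply (rule trap_le)
        apply (rule integrable_subinterval_real[OF int01]) using lo hi apply auto[1]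
      using lt apply simp
      apply (rule Bf_trap_cond) using assms lo hi lt apply auto
      done
    thus ?thesis unfolding len by (simp add: h_def)
  qed
  have A: "(\<Sum>k\<in>{1..<z-1}. Bf a b (real k / Z)) \<le> (\<Sum>k\<in>{1..<z}. Bf a b (real k / Z))"
    by (rule sum_mono2) (auto simp: Bf_nonneg)
  have "(\<Sum>k\<in>{1..<z-1}. Bf a b (real (k+1) / Z)) = (\<Sum>k\<in>{1+1..<z-1+1}. Bf a b (real k / Z))"
    by (subst sum.shift_bounds_nat_ivl) simp
  also have "\<dots> \<le> (\<Sum>k\<in>{1..<z}. Bf a b (real k / Z))"
    by (rule sum_mono2) (auto simp: Bf_nonneg)
  finally have B: "(\<Sum>k\<in>{1..<z-1}. Bf a b (real (k+1) / Z)) \<le> (\<Sum>k\<in>{1..<z}. Bf a b (real k / Z))" .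
  have "integral {1 / real z .. 1 - 1 / real z} (Bf a b) = (\<Sum>k\<in>{1..<z-1}. integral {0 + real k * h .. 0 + real (k+1) * h} (Bf a b))"
    using cs unfolding e1 e2 .
  also have "\<dots> \<le> (\<Sum>k\<in>{1..<z-1}. h * (Bf a b (real k / Z) + Bf a b (real (k+1) / Z)) / 2)"
    by (rule sum_mono) (rule cell)
  also have "\<dots> = h / 2 * ((\<Sum>k\<in>{1..<z-1}. Bf a b (real k / Z)) + (\<Sum>k\<in>{1..<z-1}. Bf a b (real (k+1) / Z)))"
    by (simp add: sum_distrib_left sum.distrib[symmetric] algebra_simps add_divide_distrib)
  also have "\<dots> \<le> h / 2 * ((\<Sum>k\<in>{1..<z}. Bf a b (real k / Z)) + (\<Sum>k\<in>{1..<z}. Bf a b (real k / Z)))"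
    using A B Z by (intro mult_left_mono) (auto simp: h_def)
  also have "\<dots> = (1 / real z) * (\<Sum>x\<in>{1..<z}. Bf a b (real x / real z))"
    by (simp add: h_def Z_def)
  finally show ?thesis .
qed

lemma disc_beta:
  assumes "0 < a" "a \<le> 1" "0 < b" "b \<le> 1"
  shows "(\<lambda>z. (\<Sum>x\<in>{1..<z}. real x powr (a-1) * real (z-x) powr (b-1)) / real z powr (a+b-1))
           \<longlonglongrightarrow> Beta a b"
proof -
  define G where "G x = integral {0..x} (Bf a b)" for x
  have int01: "Bf a b integrable_on {0..1}" using Bf_int assms by simp
  have cont: "continuous_on {0..1} G"
    unfolding G_def by (rule indefinite_integral_continuous_1[OF int01])
  have G1: "G 1 = Beta a b" using Bf_has_int assms by (simp add: G_def integral_unique)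
  have G0: "G 0 = 0" by (simp add: G_def)
  have lim1: "(\<lambda>z::nat. 1 / real z) \<longlonglongrightarrow> 0" by (rule lim_1_over_n)
  have ev1: "\<forall>\<^sub>F z in sequentially. 1 / real z \<in> {0..1}"
    using eventually_ge_at_top[of "1::nat"] by eventually_elim auto
  have ev2: "\<forall>\<^sub>F z in sequentially. 1 - 1 / real z \<in> {0..1}"
    using eventually_ge_at_top[of "1::nat"] by eventually_elim auto
  have L1: "(\<lambda>z. G (1 - 1 / real z)) \<longlonglongrightarrow> G (1 - 0)"
    by (rule continuous_on_tendsto_compose[OF cont _ _ ev2]) (use tendsto_diff[OF tendsto_const lim1, of 1] in auto)
  have L2: "(\<lambda>z. G (1 / real z)) \<longlonglongrightarrow> G 0"
    by (rule continuous_on_tendsto_compose[OF cont lim1 _ ev1]) auto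
  have L: "(\<lambda>z. G (1 - 1 / real z) - G (1 / real z)) \<longlonglongrightarrow> Beta a b"
    using tendsto_diff[OF L1 L2] G1 G0 by simp
  have J: "integral {1 / real z .. 1 - 1 / real z} (Bf a b) = G (1 - 1 / real z) - G (1 / real z)"
    if z: "z \<ge> 2" for z :: nat
  proof -
    have z': "real z \<ge> 2" using z by simp
    have "1 / real z \<le> 1 / 2" using z' by (simp add: field_simps)
    hence c: "1 / real z \<le> 1 - 1 / real z" by linarith
    have i: "Bf a b integrable_on {0..1 - 1 / real z}"
      by (rule integrable_subinterval_real[OF int01]) auto
    show ?thesis
      using Henstock_Kurzweil_Integration.integral_combine[OF _ c i] by (simp add: G_def)
  qed
  define R where "R z = (1 / real z) * (\<Sum>x\<in>{1..<z}. Bf a b (real x / real z))" for z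
  have "R \<longlonglongrightarrow> Beta a b"
  proof (rule tendsto_sandwich[OF _ _ L tendsto_const])
    show "\<forall>\<^sub>F z in sequentially. G (1 - 1 / real z) - G (1 / real z) \<le> R z"
      using eventually_ge_at_top[of "2::nat"]
    proof eventually_elim
      case (elim z)
      thus ?case using J[OF elim] disc_lower[OF assms elim] by (simp add: R_def)
    qed
    show "\<forall>\<^sub>F z in sequentially. R z \<le> Beta a b"
      using eventually_ge_at_top[of "1::nat"]
      by eventually_elim (use disc_upper[OF assms] in \<open>auto simp: R_def\<close>)
  qed
  moreover have "\<forall>\<^sub>F z in sequentially. R z = (\<Sum>x\<in>{1..<z}. real x powr (a-1) * real (z-x) powr (b-1)) / real z powr (a+b-1)"
    using eventually_ge_at_top[of "1::nat"]
    by eventually_elim (simp only: R_def disc_rewrite)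
  ultimately show ?thesis by (rule Lim_transform_eventually)
qed

fun Tf :: "real \<Rightarrow> nat \<Rightarrow> nat \<Rightarrow> real" where
  "Tf \<alpha> 0 z = (if z = 0 then 1 else 0)"
| "Tf \<alpha> (Suc k) z = (\<Sum>x\<in>{1..z}. real x powr (\<alpha> - 1) * Tf \<alpha> k (z - x))"

lemma Tf_nonneg: "Tf \<alpha> k z \<ge> 0"
  by (induction k arbitrary: z) (auto intro!: sum_nonneg mult_nonneg_nonneg)

lemma Tf_zero: "k \<ge> 1 \<Longrightarrow> Tf \<alpha> k 0 = 0"
  by (cases k) auto

lemma Tf_Suc_lt:
  assumes "k \<ge> 1"
  shows "Tf \<alpha> (Suc k) z = (\<Sum>x\<in>{1..<z}. real x powr (\<alpha> - 1) * Tf \<alpha> k (z - x))"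
proof (cases "z = 0")
  case True thus ?thesis by simp
next
  case False
  hence "{1..z} = insert z {1..<z}" by auto
  thus ?thesis using Tf_zero[OF assms] by simp
qed

lemma Tf_one:
  assumes "z \<ge> 1"
  shows "Tf \<alpha> 1 z = real z powr (\<alpha> - 1)"
proof -
  have "Tf \<alpha> 1 z = (\<Sum>x\<in>{1..z}. real x powr (\<alpha> - 1) * Tf \<alpha> 0 (z - x))"
    by (simp only: One_nat_def Tf.simps(2))
  also have "\<dots> = (\<Sum>x\<in>{1..z}. if x = z then real x powr (\<alpha> - 1) else 0)"
    by (rule sum.cong) auto
  also have "\<dots> = real z powr (\<alpha> - 1)" using assms by (simp add: sum.delta')
  finally show ?thesis .
qed

lemma Tf_step:
  assumes a0: "0 < \<alpha>" and k1: "k \<ge> 1" and ka: "real (Suc k) * \<alpha> \<le> 1"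
    and IH: "(\<lambda>z. Tf \<alpha> k z / real z powr (real k * \<alpha> - 1)) \<longlonglongrightarrow> c"
  shows "(\<lambda>z. Tf \<alpha> (Suc k) z / real z powr (real (Suc k) * \<alpha> - 1)) \<longlonglongrightarrow> c * Beta \<alpha> (real k * \<alpha>)"
proof -
  define q where "q = real k * \<alpha> - 1"
  define p where "p = real (Suc k) * \<alpha> - 1"
  have hp: "p = \<alpha> + real k * \<alpha> - 1" by (simp add: p_def algebra_simps)
  have a1: "\<alpha> \<le> 1" using ka k1 a0
    by (smt (verit, ccfv_SIG) mult_le_cancel_right1 of_nat_0_le_iff of_nat_Suc)
  have kpos: "0 < real k * \<alpha>" using k1 a0 by simp
  have kle: "real k * \<alpha> \<le> 1" using ka a0 by (simp add: algebra_simps)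
  have q0: "q \<le> 0" using kle by (simp add: q_def)
  define B0 where "B0 = Beta \<alpha> (real k * \<alpha>)"
  define W where "W z = (\<Sum>x\<in>{1..<z}. real x powr (\<alpha>-1) * real (z-x) powr q)" for z
  have WL: "(\<lambda>z. W z / real z powr p) \<longlonglongrightarrow> B0"
    using disc_beta[OF a0 a1 kpos kle] unfolding W_def B0_def q_def hp by simp
  have Wnn: "W z \<ge> 0" for z unfolding W_def by (intro sum_nonneg) auto
  define e where "e y = Tf \<alpha> k y / real y powr q - c" for y
  have eL: "e \<longlonglongrightarrow> 0"
    using tendsto_diff[OF IH tendsto_const[of c]] unfolding e_def q_def by simp
  obtain E where E: "\<And>y. \<bar>e y\<bar> \<le> E"
  proof -
    have "Bseq e" using eL by (intro convergent_imp_Bseq convergentI)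
    then obtain K where "\<And>y. norm (e y) \<le> K" unfolding Bseq_def by auto
    thus ?thesis using that by auto
  qed
  have E0: "E \<ge> 0" using E[of 0] by linarith
  have Tfe: "Tf \<alpha> k y - c * real y powr q = real y powr q * e y" if "y \<ge> 1" for y
    using that by (simp add: e_def field_simps)
  define D where "D z = Tf \<alpha> (Suc k) z - c * W z" for z
  have Dsum: "D z = (\<Sum>x\<in>{1..<z}. real x powr (\<alpha>-1) * (real (z-x) powr q * e (z-x)))" for z
  proof -
    have "D z = (\<Sum>x\<in>{1..<z}. real x powr (\<alpha>-1) * (Tf \<alpha> k (z - x) - c * real (z-x) powr q))"
      unfolding D_def Tf_Suc_lt[OF k1] W_def
      by (simp add: sum_distrib_left sum_subtractf algebra_simps)
    also have "\<dots> = (\<Sum>x\<in>{1..<z}. real x powr (\<alpha>-1) * (real (z-x) powr q * e (z-x)))"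
      by (intro sum.cong refl) (subst Tfe, auto)
    finally show ?thesis .
  qed
  have Dbound: "\<bar>D z\<bar> \<le> \<delta> * W z + E * real M * (real z / 2) powr (\<alpha> - 1)"
    if M1: "M \<ge> 1" and zM: "z \<ge> 2 * M" and dM: "\<And>y. y \<ge> M \<Longrightarrow> \<bar>e y\<bar> \<le> \<delta>" and d0: "\<delta> \<ge> 0"
    for z M \<delta>
  proof -
    have tm: "\<bar>real x powr (\<alpha>-1) * (real (z-x) powr q * e (z-x))\<bar>
        \<le> \<delta> * (real x powr (\<alpha>-1) * real (z-x) powr q) + (if z - x < M then E * (real z / 2) powr (\<alpha> - 1) else 0)"
      if x: "x \<in> {1..<z}" for x
    proof -
      have st0: "0 \<le> real x powr (\<alpha>-1) * real (z-x) powr q" by simp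
      have eq: "\<bar>real x powr (\<alpha>-1) * (real (z-x) powr q * e (z-x))\<bar> = (real x powr (\<alpha>-1) * real (z-x) powr q) * \<bar>e (z-x)\<bar>"
        by (simp add: abs_mult)
      show ?thesis
      proof (cases "z - x < M")
        case False
        hence "\<bar>e (z-x)\<bar> \<le> \<delta>" using dM by simp
        hence "(real x powr (\<alpha>-1) * real (z-x) powr q) * \<bar>e (z-x)\<bar> \<le> (real x powr (\<alpha>-1) * real (z-x) powr q) * \<delta>"
          by (intro mult_left_mono st0)
        thus ?thesis using False eq by (simp add: mult.commute)
      next
        case True
        have xz: "real z / 2 \<le> real x" using True zM x by auto
        have x1: "real x powr (\<alpha>-1) \<le> (real z / 2) powr (\<alpha>-1)"
          by (rule powr_mono2') (use a1 xz x zM M1 in auto)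
        have x2: "real (z-x) powr q \<le> 1"
        proof -
          have "real (z-x) powr q \<le> 1 powr q" by (rule powr_mono2') (use q0 x in auto)
          thus ?thesis by simp
        qed
        have "real x powr (\<alpha>-1) * real (z-x) powr q \<le> (real z / 2) powr (\<alpha>-1) * 1"
          by (intro mult_mono x1 x2) auto
        hence "(real x powr (\<alpha>-1) * real (z-x) powr q) * \<bar>e (z-x)\<bar> \<le> ((real z / 2) powr (\<alpha>-1)) * E"
          using E[of "z-x"] by (intro mult_mono) auto
        moreover have "0 \<le> \<delta> * (real x powr (\<alpha>-1) * real (z-x) powr q)" using d0 by simp
        ultimately show ?thesis using True eq by (simp add: mult.commute)
      qed
    qed
    have "\<bar>D z\<bar> \<le> (\<Sum>x\<in>{1..<z}. \<bar>real x powr (\<alpha>-1) * (real (z-x) powr q * e (z-x))\<bar>)"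
      unfolding Dsum by (rule sum_abs)
    also have "\<dots> \<le> (\<Sum>x\<in>{1..<z}. \<delta> * (real x powr (\<alpha>-1) * real (z-x) powr q) + (if z - x < M then E * (real z / 2) powr (\<alpha> - 1) else 0))"
      by (rule sum_mono) (rule tm)
    also have "\<dots> = \<delta> * W z + (\<Sum>x\<in>{1..<z}. if z - x < M then E * (real z / 2) powr (\<alpha> - 1) else 0)"
      by (simp add: sum.distrib sum_distrib_left W_def)
    also have "(\<Sum>x\<in>{1..<z}. if z - x < M then E * (real z / 2) powr (\<alpha> - 1) else 0)
        = real (card {x\<in>{1..<z}. z - x < M}) * (E * (real z / 2) powr (\<alpha> - 1))"
      by (simp add: sum.inter_filter[symmetric])
    also have "\<dots> \<le> real M * (E * (real z / 2) powr (\<alpha> - 1))"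
    proof (intro mult_right_mono)
      have "{x\<in>{1..<z}. z - x < M} \<subseteq> {z-M..<z}" by auto
      hence "card {x\<in>{1..<z}. z - x < M} \<le> card {z-M..<z}" by (intro card_mono) auto
      also have "\<dots> = M" using zM by simp
      finally show "real (card {x\<in>{1..<z}. z - x < M}) \<le> real M" by simp
    qed (use E0 in simp)
    finally show ?thesis by (simp add: algebra_simps)
  qed
  have DL: "(\<lambda>z. D z / real z powr p) \<longlonglongrightarrow> 0"
    unfolding tendsto_iff
  proof (intro allI impI)
    fix \<epsilon> :: real assume \<epsilon>: "\<epsilon> > 0"
    define \<delta> where "\<delta> = \<epsilon> / (2 * (\<bar>B0\<bar> + 2))"
    have d0: "\<delta> > 0" using \<epsilon> by (simp add: \<delta>_def)
    obtain M0 where M0: "\<And>y. y \<ge> M0 \<Longrightarrow> \<bar>e y\<bar> < \<delta>"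
      using eL[unfolded tendsto_iff, rule_format, OF d0] by (auto simp: eventually_sequentially)
    define M where "M = max M0 1"
    have M1: "M \<ge> 1" by (simp add: M_def)
    have dM: "\<bar>e y\<bar> \<le> \<delta>" if "y \<ge> M" for y using M0[of y] that by (simp add: M_def)
    define C where "C = E * real M * 2 powr (1 - \<alpha>)"
    have pw: "(\<lambda>z. real z powr (- (real k * \<alpha>))) \<longlonglongrightarrow> 0"
      by (rule tendsto_neg_powr) (use kpos filterlim_real_sequentially in auto)
    have pw2: "(\<lambda>z. C * real z powr (- (real k * \<alpha>))) \<longlonglongrightarrow> 0"
      using tendsto_mult[OF tendsto_const[of C] pw] by simp
    have ev1: "\<forall>\<^sub>F z in sequentially. C * real z powr (- (real k * \<alpha>)) < \<epsilon> / 2"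
      using pw2[unfolded tendsto_iff, rule_format, of "\<epsilon>/2"] \<epsilon>
      by (auto elim!: eventually_mono)
    have ev2: "\<forall>\<^sub>F z in sequentially. W z / real z powr p < \<bar>B0\<bar> + 1"
      using WL[unfolded tendsto_iff, rule_format, of 1]
      by (auto elim!: eventually_mono simp: dist_real_def)
    have ev3: "\<forall>\<^sub>F z in sequentially. z \<ge> 2 * M" by (rule eventually_ge_at_top)
    show "\<forall>\<^sub>F z in sequentially. dist (D z / real z powr p) 0 < \<epsilon>"
      using ev1 ev2 ev3
    proof eventually_elim
      case (elim z)
      have z1: "real z \<ge> 2" using elim(3) M1 by linarith
      have zp: "real z powr p > 0" using z1 by simp
      have iden: "(real z / 2) powr (\<alpha> - 1) / real z powr p = 2 powr (1 - \<alpha>) * real z powr (- (real k * \<alpha>))"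
      proof -
        have "(real z / 2) powr (\<alpha> - 1) = real z powr (\<alpha> - 1) * 2 powr (1 - \<alpha>)"
        proof -
          have "(real z / 2) powr (\<alpha> - 1) = real z powr (\<alpha> - 1) / 2 powr (\<alpha> - 1)"
            using z1 by (simp add: powr_divide)
          moreover have "2 powr (1 - \<alpha>) = 1 / 2 powr (\<alpha> - 1)"
            using powr_minus_divide[of 2 "\<alpha> - 1"] by simp
          ultimately show ?thesis by simp
        qed
        moreover have "real z powr (\<alpha> - 1) / real z powr p = real z powr (- (real k * \<alpha>))"
          using z1 by (simp add: powr_diff[symmetric] p_def algebra_simps)
        ultimately show ?thesis by (metis mult.commute times_divide_eq_right)
      qed
      have "\<bar>D z\<bar> / real z powr p \<le> (\<delta> * W z + E * real M * (real z / 2) powr (\<alpha> - 1)) / real z powr p"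
        by (rule divide_right_mono[OF Dbound[OF M1 elim(3) dM d0[THEN less_imp_le]]]) (auto simp: powr_ge_zero)
      also have "\<dots> = \<delta> * (W z / real z powr p) + E * real M * ((real z / 2) powr (\<alpha> - 1) / real z powr p)"
        by (simp add: add_divide_distrib)
      also have "\<dots> = \<delta> * (W z / real z powr p) + C * real z powr (- (real k * \<alpha>))"
        unfolding iden C_def by (simp add: mult.assoc)
      also have "\<dots> < \<delta> * (\<bar>B0\<bar> + 1) + \<epsilon> / 2"
        using elim(1,2) d0 by (intro add_le_less_mono mult_left_mono) auto
      also have "\<delta> * (\<bar>B0\<bar> + 1) \<le> \<epsilon> / 2"
        using \<epsilon> by (simp add: \<delta>_def field_simps)
      finally show ?case using zp by (simp add: dist_real_def abs_divide)
    qed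
  qed
  have "(\<lambda>z. D z / real z powr p + c * (W z / real z powr p)) \<longlonglongrightarrow> 0 + c * B0"
    by (intro tendsto_intros DL WL)
  moreover have "D z / real z powr p + c * (W z / real z powr p) = Tf \<alpha> (Suc k) z / real z powr p" for z
    by (simp add: D_def diff_divide_distrib)
  ultimately show ?thesis unfolding p_def B0_def by simp
qed


lemma Tf_lim:
  assumes "0 < \<alpha>" "k \<ge> 1" "real k * \<alpha> \<le> 1"
  shows "(\<lambda>z. Tf \<alpha> k z / real z powr (real k * \<alpha> - 1)) \<longlonglongrightarrow> Gamma \<alpha> ^ k / Gamma (real k * \<alpha>)"
  using assms(2,3)
proof (induction k)
  case 0 thus ?case by simp
next
  case (Suc k)
  show ?case
  proof (cases "k = 0")
    case True
    have ev: "\<forall>\<^sub>F z in sequentially. 1 = Tf \<alpha> (Suc k) z / real z powr (real (Suc k) * \<alpha> - 1)"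
      using eventually_ge_at_top[of "1::nat"]
      by eventually_elim (use True Tf_one[of _ \<alpha>] in auto)
    have G: "Gamma \<alpha> ^ Suc k / Gamma (real (Suc k) * \<alpha>) = 1"
      using True Gamma_real_pos[OF assms(1)] by simp
    show ?thesis unfolding G by (rule Lim_transform_eventually[OF tendsto_const ev])
  next
    case False
    hence k1: "k \<ge> 1" by simp
    have "real k * \<alpha> \<le> real (Suc k) * \<alpha>" using assms(1) by (intro mult_right_mono) auto
    hence IH: "(\<lambda>z. Tf \<alpha> k z / real z powr (real k * \<alpha> - 1)) \<longlonglongrightarrow> Gamma \<alpha> ^ k / Gamma (real k * \<alpha>)"
      using Suc.IH[OF k1] Suc.prems(2) by linarith
    have L: "(\<lambda>z. Tf \<alpha> (Suc k) z / real z powr (real (Suc k) * \<alpha> - 1)) \<longlonglongrightarrow>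
        Gamma \<alpha> ^ k / Gamma (real k * \<alpha>) * Beta \<alpha> (real k * \<alpha>)"
      by (rule Tf_step[OF assms(1) k1 Suc.prems(2) IH])
    have g: "Gamma (real k * \<alpha>) > 0" using k1 assms(1) by (intro Gamma_real_pos) simp
    have e: "\<alpha> + real k * \<alpha> = real (Suc k) * \<alpha>" by (simp add: algebra_simps)
    have "Gamma \<alpha> ^ k / Gamma (real k * \<alpha>) * Beta \<alpha> (real k * \<alpha>) = Gamma \<alpha> ^ Suc k / Gamma (real (Suc k) * \<alpha>)"
    proof -
      have aux: "\<And>x y w :: real. y > 0 \<Longrightarrow> x ^ k / y * (x * y / w) = x ^ Suc k / w"
        by (simp add: field_simps)
      show ?thesis unfolding Beta_def e by (rule aux[OF g])
    qed
    with L show ?thesis by simp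
  qed
qed

lemma Tf_small:
  assumes "0 < \<alpha>" "r < k" "real k * \<alpha> \<le> 1"
  shows "(\<lambda>z. Tf \<alpha> r z) \<longlonglongrightarrow> 0"
proof (cases "r = 0")
  case True
  have "\<forall>\<^sub>F z in sequentially. 0 = Tf \<alpha> r z"
    using eventually_ge_at_top[of "1::nat"] by eventually_elim (use True in auto)
  thus ?thesis using Lim_transform_eventually[OF tendsto_const[of 0]] by simp
next
  case False
  have rle: "real r * \<alpha> < real k * \<alpha>" using assms by (intro mult_strict_right_mono) auto
  have r1: "real r * \<alpha> \<le> 1" using rle assms by linarith
  have L1: "(\<lambda>z. Tf \<alpha> r z / real z powr (real r * \<alpha> - 1)) \<longlonglongrightarrow> Gamma \<alpha> ^ r / Gamma (real r * \<alpha>)"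
    by (rule Tf_lim) (use assms False r1 in auto)
  have L2: "(\<lambda>z. real z powr (real r * \<alpha> - 1)) \<longlonglongrightarrow> 0"
    by (rule tendsto_neg_powr) (use rle assms(3) filterlim_real_sequentially in auto)
  have L3: "(\<lambda>z. Tf \<alpha> r z / real z powr (real r * \<alpha> - 1) * real z powr (real r * \<alpha> - 1)) \<longlonglongrightarrow> 0"
    using tendsto_mult[OF L1 L2] by simp
  have ev: "\<forall>\<^sub>F z in sequentially. Tf \<alpha> r z / real z powr (real r * \<alpha> - 1) * real z powr (real r * \<alpha> - 1) = Tf \<alpha> r z"
    using eventually_ge_at_top[of "1::nat"] by eventually_elim simp
  show ?thesis by (rule Lim_transform_eventually[OF L3 ev])
qed

definition Ls :: "nat \<Rightarrow> nat \<Rightarrow> nat list set" where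
  "Ls k z = {xs. length xs = k \<and> (\<forall>x\<in>set xs. 0 < x) \<and> sum_list xs = z}"

lemma Ls_finite: "finite (Ls k z)"
proof (rule finite_subset)
  show "Ls k z \<subseteq> {xs. set xs \<subseteq> {0..z} \<and> length xs = k}"
    by (auto simp: Ls_def intro: member_le_sum_list)
  show "finite {xs. set xs \<subseteq> {0..z} \<and> length xs = k}"
    by (rule finite_lists_length_eq) simp
qed

lemma Ls_Suc: "Ls (Suc k) z = (\<lambda>(x, ys). x # ys) ` (SIGMA x:{1..z}. Ls k (z - x))"
proof (intro equalityI subsetI)
  fix xs assume xs: "xs \<in> Ls (Suc k) z"
  then obtain x ys where e: "xs = x # ys" by (cases xs) (auto simp: Ls_def)
  have "(x, ys) \<in> (SIGMA x:{1..z}. Ls k (z - x))" using xs e by (auto simp: Ls_def)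
  thus "xs \<in> (\<lambda>(x, ys). x # ys) ` (SIGMA x:{1..z}. Ls k (z - x))" using e by force
next
  fix xs assume "xs \<in> (\<lambda>(x, ys). x # ys) ` (SIGMA x:{1..z}. Ls k (z - x))"
  then obtain x ys where "xs = x # ys" "x \<in> {1..z}" "ys \<in> Ls k (z - x)" by auto
  thus "xs \<in> Ls (Suc k) z" by (auto simp: Ls_def)
qed

lemma Tf_list: "Tf \<alpha> k z = (\<Sum>xs\<in>Ls k z. prod_list (map (\<lambda>x. real x powr (\<alpha> - 1)) xs))"
proof (induction k arbitrary: z)
  case 0
  have "Ls 0 z = (if z = 0 then {[]} else {})" by (auto simp: Ls_def)
  thus ?case by simp
next
  case (Suc k)
  have inj: "inj_on (\<lambda>(x, ys). x # ys) (SIGMA x:{1..z}. Ls k (z - x))"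
    by (auto simp: inj_on_def)
  have "(\<Sum>xs\<in>Ls (Suc k) z. prod_list (map (\<lambda>x. real x powr (\<alpha> - 1)) xs))
      = (\<Sum>(x, ys)\<in>(SIGMA x:{1..z}. Ls k (z - x)). prod_list (map (\<lambda>x. real x powr (\<alpha> - 1)) (x # ys)))"
    unfolding Ls_Suc by (subst sum.reindex[OF inj]) (simp add: case_prod_unfold)
  also have "\<dots> = (\<Sum>x\<in>{1..z}. \<Sum>ys\<in>Ls k (z - x). real x powr (\<alpha> - 1) * prod_list (map (\<lambda>x. real x powr (\<alpha> - 1)) ys))"
    by (subst sum.Sigma[symmetric]) (auto simp: Ls_finite)
  also have "\<dots> = Tf \<alpha> (Suc k) z"
    by (simp add: Suc.IH sum_distrib_left)
  finally show ?case by simp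
qed

lemma prod_list_map_nonneg:
  fixes g :: "nat \<Rightarrow> real"
  shows "(\<And>x. x \<in> set xs \<Longrightarrow> 0 \<le> g x) \<Longrightarrow> 0 \<le> prod_list (map g xs)"
  by (induction xs) auto

lemma prod_list_le_set:
  fixes g :: "nat \<Rightarrow> real"
  assumes "\<And>x. x \<in> set xs \<Longrightarrow> 0 \<le> g x \<and> g x \<le> 1"
  shows "prod_list (map g xs) \<le> prod g (set xs)"
  using assms
proof (induction xs)
  case Nil thus ?case by simp
next
  case (Cons x xs)
  have IH: "prod_list (map g xs) \<le> prod g (set xs)" using Cons by auto
  have nn: "0 \<le> prod_list (map g xs)" using Cons.prems by (intro prod_list_map_nonneg) auto
  have gx: "0 \<le> g x" "g x \<le> 1" using Cons.prems by auto
  show ?case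
  proof (cases "x \<in> set xs")
    case True
    hence "prod g (set (x # xs)) = prod g (set xs)" by (simp add: insert_absorb)
    moreover have "g x * prod_list (map g xs) \<le> 1 * prod_list (map g xs)"
      using gx nn by (intro mult_right_mono) auto
    ultimately show ?thesis using IH by simp
  next
    case False
    thus ?thesis using IH gx by (simp add: mult_left_mono)
  qed
qed

lemma prod_list_le_pow:
  fixes f h :: "nat \<Rightarrow> real"
  assumes "\<And>x. x \<in> set ys \<Longrightarrow> 0 \<le> f x \<and> f x \<le> c * h x" "\<And>x. x \<in> set ys \<Longrightarrow> 0 \<le> h x" "0 \<le> c"
  shows "prod_list (map f ys) \<le> c ^ length ys * prod_list (map h ys)"
  using assms
proof (induction ys)
  case Nil thus ?case by simp
next
  case (Cons y ys)
  have IH: "prod_list (map f ys) \<le> c ^ length ys * prod_list (map h ys)" using Cons by auto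
  have nn: "0 \<le> prod_list (map f ys)" using Cons.prems by (intro prod_list_map_nonneg) auto
  have "f y * prod_list (map f ys) \<le> (c * h y) * (c ^ length ys * prod_list (map h ys))"
    using Cons.prems IH nn by (intro mult_mono) auto
  thus ?case by (simp add: algebra_simps)
qed

lemma sum_count_list: "(\<Sum>x\<in>set xs. count_list xs x * f x) = sum_list (map f xs)"
proof (induction xs)
  case Nil thus ?case by simp
next
  case (Cons y ys)
  show ?case
  proof (cases "y \<in> set ys")
    case True
    have "(\<Sum>x\<in>set (y # ys). count_list (y # ys) x * f x) = (\<Sum>x\<in>set ys. count_list ys x * f x + (if x = y then f x else 0))"
      using True by (intro sum.cong) (auto simp: insert_absorb)
    also have "\<dots> = sum_list (map f ys) + f y" using True by (simp add: sum.distrib Cons.IH)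
    finally show ?thesis by simp
  next
    case False
    have "(\<Sum>x\<in>set ys. count_list (y # ys) x * f x) = (\<Sum>x\<in>set ys. count_list ys x * f x)"
      using False by (intro sum.cong) auto
    thus ?thesis using False Cons.IH by simp
  qed
qed

lemma sum_fiber_le:
  fixes h :: "'b \<Rightarrow> real"
  assumes "finite A" "finite B" "f ` A \<subseteq> B" "\<And>b. b \<in> B \<Longrightarrow> 0 \<le> h b"
    and "\<And>b. b \<in> f ` A \<Longrightarrow> card {a\<in>A. f a = b} \<le> K"
  shows "(\<Sum>a\<in>A. h (f a)) \<le> real K * (\<Sum>b\<in>B. h b)"
proof -
  have "(\<Sum>a\<in>A. h (f a)) = (\<Sum>b\<in>f ` A. \<Sum>a\<in>{a\<in>A. f a = b}. h (f a))"
    by (rule sum.image_gen[OF assms(1)])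
  also have "\<dots> = (\<Sum>b\<in>f ` A. real (card {a\<in>A. f a = b}) * h b)"
    by (intro sum.cong refl) simp
  also have "\<dots> \<le> (\<Sum>b\<in>f ` A. real K * h b)"
    using assms by (intro sum_mono mult_right_mono) auto
  also have "\<dots> \<le> (\<Sum>b\<in>B. real K * h b)"
    using assms by (intro sum_mono2) auto
  finally show ?thesis by (simp add: sum_distrib_left)
qed

lemma Omega_memD:
  assumes "w \<in> Omega s z"
  obtains a where "finite w" "0 \<notin> w" "\<forall>x\<in>w. a x \<ge> 1" "(\<Sum>x\<in>w. a x) = s" "z = (\<Sum>x\<in>w. a x * x)"
  using assms unfolding Omega_def sigma_def by auto

lemma Omega_sub: "w \<in> Omega s z \<Longrightarrow> w \<subseteq> {1..z}"
proof
  fix x assume w: "w \<in> Omega s z" and x: "x \<in> w"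
  obtain a where a: "finite w" "0 \<notin> w" "\<forall>x\<in>w. a x \<ge> 1" "(\<Sum>x\<in>w. a x) = s" "z = (\<Sum>x\<in>w. a x * x)"
    using Omega_memD[OF w] by blast
  have "x \<le> a x * x" using a x by simp
  also have "\<dots> \<le> (\<Sum>x\<in>w. a x * x)" by (rule member_le_sum) (use a x in auto)
  finally show "x \<in> {1..z}" using a x by (cases x) auto
qed

lemma Omega_finite: "finite (Omega s z)"
proof -
  have "Omega s z \<subseteq> Pow {1..z}" using Omega_sub by blast
  thus ?thesis by (rule finite_subset) simp
qed

lemma sum_list_distinct: "distinct xs \<Longrightarrow> sum_list xs = (\<Sum>x\<in>set xs. x)"
  by (induction xs) auto

lemma Omega_card_le:
  assumes "w \<in> Omega s z" shows "card w \<le> s"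
proof -
  obtain a where a: "finite w" "0 \<notin> w" "\<forall>x\<in>w. a x \<ge> 1" "(\<Sum>x\<in>w. a x) = s" "z = (\<Sum>x\<in>w. a x * x)"
    using Omega_memD[OF assms] by blast
  have "card w = (\<Sum>x\<in>w. 1)" by simp
  also have "\<dots> \<le> (\<Sum>x\<in>w. a x)" using a by (intro sum_mono) auto
  finally show ?thesis using a by simp
qed

lemma D_char:
  "(w \<in> Omega s z \<and> card w = s) \<longleftrightarrow> (finite w \<and> 0 \<notin> w \<and> card w = s \<and> (\<Sum>x\<in>w. x) = z)"
proof
  assume h: "w \<in> Omega s z \<and> card w = s"
  obtain a where a: "finite w" "0 \<notin> w" "\<forall>x\<in>w. a x \<ge> 1" "(\<Sum>x\<in>w. a x) = s" "z = (\<Sum>x\<in>w. a x * x)"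
    using Omega_memD h by blast
  have a1: "a x = 1" if "x \<in> w" for x
  proof -
    have "(\<Sum>x\<in>w. (1::nat)) = (\<Sum>x\<in>w. a x)" using a h by simp
    thus ?thesis using sum_mono_inv[of "\<lambda>_. (1::nat)" w a x] a that by auto
  qed
  have "z = (\<Sum>x\<in>w. x)" using a a1 by simp
  thus "finite w \<and> 0 \<notin> w \<and> card w = s \<and> (\<Sum>x\<in>w. x) = z" using a h by simp
next
  assume h: "finite w \<and> 0 \<notin> w \<and> card w = s \<and> (\<Sum>x\<in>w. x) = z"
  have "z \<in> sigma s w" unfolding sigma_def using h by (intro CollectI exI[of _ "\<lambda>_. 1"]) auto
  thus "w \<in> Omega s z \<and> card w = s" using h by (simp add: Omega_def)
qed

lemma PE_eq: "finite w \<Longrightarrow> PE s w = (1 / real s) ^ card w * (\<Prod>x\<in>w. real x powr (1 / real s - 1))"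
proof -
  assume "finite w"
  have e: "(-1 + 1 / real s) = (1 / real s - 1)" by simp
  have "PE s w = (\<Prod>x\<in>w. (1 / real s) * real x powr (1 / real s - 1))"
    unfolding PE_def e ..
  also have "\<dots> = (\<Prod>x\<in>w. (1 / real s)) * (\<Prod>x\<in>w. real x powr (1 / real s - 1))"
    by (rule prod.distrib)
  finally show ?thesis by simp
qed

lemma DL_eq: "{xs\<in>Ls s z. distinct xs} = (\<Union>w\<in>{w\<in>Omega s z. card w = s}. permutations_of_set w)"
proof (intro equalityI subsetI)
  fix xs assume xs: "xs \<in> {xs\<in>Ls s z. distinct xs}"
  have "set xs \<in> {w\<in>Omega s z. card w = s}"
    unfolding mem_Collect_eq D_char using xs
    by (auto simp: Ls_def distinct_card sum_list_distinct)
  moreover have "xs \<in> permutations_of_set (set xs)" using xs by (simp add: permutations_of_set_def)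
  ultimately show "xs \<in> (\<Union>w\<in>{w\<in>Omega s z. card w = s}. permutations_of_set w)" by blast
next
  fix xs assume "xs \<in> (\<Union>w\<in>{w\<in>Omega s z. card w = s}. permutations_of_set w)"
  then obtain w where w: "w \<in> Omega s z" "card w = s" "set xs = w" "distinct xs"
    by (auto simp: permutations_of_set_def)
  have "finite w \<and> 0 \<notin> w \<and> card w = s \<and> (\<Sum>x\<in>w. x) = z" using w D_char by blast
  thus "xs \<in> {xs\<in>Ls s z. distinct xs}" using w
    by (auto simp: Ls_def distinct_card sum_list_distinct intro: Nat.gr0I)
qed

lemma DL_sum:
  fixes g :: "nat \<Rightarrow> real"
  shows "(\<Sum>xs\<in>{xs\<in>Ls s z. distinct xs}. prod_list (map g xs))
         = fact s * (\<Sum>w\<in>{w\<in>Omega s z. card w = s}. prod g w)"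
proof -
  have fin: "finite {w\<in>Omega s z. card w = s}" using Omega_finite by simp
  have "(\<Sum>xs\<in>{xs\<in>Ls s z. distinct xs}. prod_list (map g xs))
        = (\<Sum>w\<in>{w\<in>Omega s z. card w = s}. \<Sum>xs\<in>permutations_of_set w. prod_list (map g xs))"
    unfolding DL_eq by (rule sum.UNION_disjoint[OF fin]) (force, force simp: permutations_of_set_def)
  also have "\<dots> = (\<Sum>w\<in>{w\<in>Omega s z. card w = s}. fact s * prod g w)"
  proof (intro sum.cong refl)
    fix w assume w: "w \<in> {w\<in>Omega s z. card w = s}"
    have fw: "finite w" using w D_char by blast
    have "(\<Sum>xs\<in>permutations_of_set w. prod_list (map g xs)) = (\<Sum>xs\<in>permutations_of_set w. prod g w)"
      by (intro sum.cong refl) (auto simp: permutations_of_set_def prod.distinct_set_conv_list)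
    also have "\<dots> = fact s * prod g w" using fw w by simp
    finally show "(\<Sum>xs\<in>permutations_of_set w. prod_list (map g xs)) = fact s * prod g w" .
  qed
  finally show ?thesis by (simp add: sum_distrib_left)
qed

lemma g_le1: "1 \<le> x \<Longrightarrow> e \<le> 0 \<Longrightarrow> real x powr e \<le> 1"
proof -
  assume "1 \<le> x" "e \<le> 0"
  hence "real x powr e \<le> real x powr 0" by (intro powr_mono) auto
  thus ?thesis using \<open>1 \<le> x\<close> by simp
qed

lemma NL_set:
  assumes "xs \<in> Ls s z" "\<not> distinct xs"
  shows "set xs \<in> {w\<in>Omega s z. card w \<noteq> s}"
proof -
  have len: "length xs = s" and pos: "\<forall>x\<in>set xs. 0 < x" and sm: "sum_list xs = z"
    using assms by (auto simp: Ls_def)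
  have c1: "\<forall>x\<in>set xs. count_list xs x \<ge> 1"
    by (metis count_list_0_iff less_one not_le)
  have "(\<Sum>x\<in>set xs. count_list xs x) = (\<Sum>x\<in>set xs. count_list xs x * 1)" by simp
  also have "\<dots> = sum_list (map (\<lambda>_. 1) xs)" by (rule sum_count_list)
  also have "\<dots> = s" using len by (simp add: sum_list_triv)
  finally have cs: "(\<Sum>x\<in>set xs. count_list xs x) = s" .
  have "(\<Sum>x\<in>set xs. count_list xs x * x) = sum_list (map (\<lambda>x. x) xs)" by (rule sum_count_list)
  hence cz: "z = (\<Sum>x\<in>set xs. count_list xs x * x)" using sm by simp
  have "z \<in> sigma s (set xs)" unfolding sigma_def using c1 cs cz by blast
  moreover have "0 \<notin> set xs" using pos by auto
  moreover have "card (set xs) \<noteq> s" using assms(2) len card_distinct by metis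
  ultimately show ?thesis by (simp add: Omega_def)
qed

lemma NL_bound:
  assumes "s \<ge> 1"
  shows "(\<Sum>xs\<in>{xs\<in>Ls s z. \<not> distinct xs}. prod_list (map (\<lambda>x. real x powr (1 / real s - 1)) xs))
         \<le> real (s ^ s) * (\<Sum>w\<in>{w\<in>Omega s z. card w \<noteq> s}. \<Prod>x\<in>w. real x powr (1 / real s - 1))"
proof -
  define g where "g x = real x powr (1 / real s - 1)" for x :: nat
  have e0: "1 / real s - 1 \<le> 0" using assms by simp
  have "(\<Sum>xs\<in>{xs\<in>Ls s z. \<not> distinct xs}. prod_list (map g xs)) \<le> (\<Sum>xs\<in>{xs\<in>Ls s z. \<not> distinct xs}. prod g (set xs))"
  proof (rule sum_mono, rule prod_list_le_set)
    fix xs x assume "xs \<in> {xs\<in>Ls s z. \<not> distinct xs}" "x \<in> set xs"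
    hence "1 \<le> x" by (auto simp: Ls_def Suc_le_eq)
    thus "0 \<le> g x \<and> g x \<le> 1" using g_le1[OF _ e0] by (simp add: g_def)
  qed
  also have "\<dots> \<le> real (s ^ s) * (\<Sum>w\<in>{w\<in>Omega s z. card w \<noteq> s}. prod g w)"
  proof (rule sum_fiber_le)
    show "finite {xs\<in>Ls s z. \<not> distinct xs}" using Ls_finite by simp
    show "finite {w\<in>Omega s z. card w \<noteq> s}" using Omega_finite by simp
    show "set ` {xs\<in>Ls s z. \<not> distinct xs} \<subseteq> {w\<in>Omega s z. card w \<noteq> s}"
      using NL_set by blast
    show "0 \<le> prod g w" for w by (intro prod_nonneg) (simp add: g_def)
    fix w assume w: "w \<in> set ` {xs\<in>Ls s z. \<not> distinct xs}"
    hence wO: "w \<in> Omega s z" using NL_set by blast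
    have fw: "finite w" using wO by (auto simp: Omega_def)
    have "{xs\<in>{xs\<in>Ls s z. \<not> distinct xs}. set xs = w} \<subseteq> {xs. set xs \<subseteq> w \<and> length xs = s}"
      by (auto simp: Ls_def)
    hence "card {xs\<in>{xs\<in>Ls s z. \<not> distinct xs}. set xs = w} \<le> card {xs. set xs \<subseteq> w \<and> length xs = s}"
      by (intro card_mono finite_lists_length_eq fw)
    also have "\<dots> = card w ^ s" by (rule card_lists_length_eq[OF fw])
    also have "\<dots> \<le> s ^ s" by (intro power_mono Omega_card_le[OF wO]) simp
    finally show "card {xs\<in>{xs\<in>Ls s z. \<not> distinct xs}. set xs = w} \<le> s ^ s" .
  qed
  finally show ?thesis by (simp add: g_def[abs_def])
qed

lemma zip_div: "(\<forall>x\<in>set ys. a x > 0) \<Longrightarrow>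
    map (\<lambda>(u, c). u div c) (zip (map (\<lambda>x. a x * x) ys) (map a ys)) = (ys :: nat list)"
  by (induction ys) auto

lemma g_elem:
  assumes "1 \<le> a" "a \<le> s" "1 \<le> x" "0 < \<alpha>"
  shows "real x powr (\<alpha> - 1) \<le> real s * real (a * x) powr (\<alpha> - 1)"
proof -
  have a1: "real a powr (-1) \<le> real a powr (\<alpha> - 1)" using assms by (intro powr_mono) auto
  have "real a powr (-1) = 1 / real a" using assms by (simp add: powr_minus_divide)
  hence "1 / real s \<le> real a powr (\<alpha> - 1)" using a1 assms
    by (smt (verit) frac_le of_nat_0_less_iff of_nat_le_iff zero_less_one_class.zero_le_one le_less_trans
        less_le_trans of_nat_1 zero_less_one)
  hence "real s * (1 / real s) * real x powr (\<alpha> - 1) \<le> real s * real a powr (\<alpha> - 1) * real x powr (\<alpha> - 1)"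
    by (intro mult_right_mono mult_left_mono) auto
  moreover have "real (a * x) powr (\<alpha> - 1) = real a powr (\<alpha> - 1) * real x powr (\<alpha> - 1)"
    by (simp add: powr_mult)
  ultimately show ?thesis using assms by (simp add: mult.assoc)
qed

lemma Q_bound:
  assumes s2: "s \<ge> 2"
  shows "(\<Sum>w\<in>{w\<in>Omega s z. card w \<noteq> s}. \<Prod>x\<in>w. real x powr (1 / real s - 1))
         \<le> real (s ^ s) * (real (s ^ s) * (\<Sum>r<s. Tf (1 / real s) r z))"
proof -
  define g where "g x = real x powr (1 / real s - 1)" for x :: nat
  define R where "R = {w\<in>Omega s z. card w \<noteq> s}"
  define P where "P us = prod_list (map g us)" for us
  define aw where "aw w = (SOME a. (\<forall>x\<in>w. a x \<ge> 1) \<and> (\<Sum>x\<in>w. a x) = s \<and> z = (\<Sum>x\<in>w. a x * x))" for w :: "nat set"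
  have awP: "(\<forall>x\<in>w. aw w x \<ge> 1) \<and> (\<Sum>x\<in>w. aw w x) = s \<and> z = (\<Sum>x\<in>w. aw w x * x)" if "w \<in> R" for w
  proof -
    have wO: "w \<in> Omega s z" using that by (simp add: R_def)
    obtain a where a: "finite w" "0 \<notin> w" "\<forall>x\<in>w. a x \<ge> 1" "(\<Sum>x\<in>w. a x) = s" "z = (\<Sum>x\<in>w. a x * x)"
      using Omega_memD[OF wO] by blast
    show ?thesis unfolding aw_def by (rule someI[of _ a]) (use a in auto)
  qed
  have RO: "w \<in> Omega s z" if "w \<in> R" for w using that by (simp add: R_def)
  have fin: "finite w" "0 \<notin> w" if "w \<in> R" for w using RO[OF that] by (auto simp: Omega_def)
  have cardlt: "card w < s" if "w \<in> R" for w
    using Omega_card_le[OF RO[OF that]] that by (simp add: R_def)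
  have awle: "aw w x \<le> s" if "w \<in> R" "x \<in> w" for w x
  proof -
    have "aw w x \<le> (\<Sum>x\<in>w. aw w x)" by (rule member_le_sum) (use that fin in auto)
    thus ?thesis using awP[OF that(1)] by simp
  qed
  define \<phi> where "\<phi> w = map (\<lambda>x. aw w x * x) (sorted_list_of_set w)" for w
  define U where "U = (\<Union>r\<in>{..<s}. Ls r z)"
  have \<phi>U: "\<phi> w \<in> U" if w: "w \<in> R" for w
  proof -
    have "length (\<phi> w) < s" using cardlt[OF w] fin[OF w] by (simp add: \<phi>_def)
    moreover have "\<forall>x\<in>set (\<phi> w). 0 < x"
      using awP[OF w] fin[OF w] by (auto simp: \<phi>_def intro!: mult_pos_pos Nat.gr0I)
    moreover have "sum_list (\<phi> w) = z"
      using awP[OF w] fin[OF w] by (simp add: \<phi>_def sum_list_distinct_conv_sum_set)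
    ultimately show ?thesis by (auto simp: U_def Ls_def)
  qed
  have Gle: "prod g w \<le> real s ^ s * P (\<phi> w)" if w: "w \<in> R" for w
  proof -
    define ys where "ys = sorted_list_of_set w"
    have ys: "distinct ys" "set ys = w" "length ys = card w" using fin[OF w] by (auto simp: ys_def)
    have "prod g w = prod_list (map g ys)" using ys by (metis prod.distinct_set_conv_list)
    also have "\<dots> \<le> real s ^ length ys * prod_list (map (\<lambda>x. g (aw w x * x)) ys)"
    proof (rule prod_list_le_pow)
      fix x assume x: "x \<in> set ys"
      have x1: "1 \<le> x" using fin(2)[OF w] x ys by (cases x) auto
      show "0 \<le> g x \<and> g x \<le> real s * g (aw w x * x)"
        using g_elem[of "aw w x" s x "1 / real s"] awP[OF w] awle[OF w] x ys x1 s2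
        by (auto simp: g_def)
      show "0 \<le> g (aw w x * x)" by (simp add: g_def)
    qed simp
    also have "\<dots> \<le> real s ^ s * prod_list (map (\<lambda>x. g (aw w x * x)) ys)"
    proof (rule mult_right_mono)
      show "real s ^ length ys \<le> real s ^ s"
        using cardlt[OF w] ys s2 by (intro power_increasing) auto
      show "0 \<le> prod_list (map (\<lambda>x. g (aw w x * x)) ys)"
        by (intro prod_list_map_nonneg) (simp add: g_def)
    qed
    also have "prod_list (map (\<lambda>x. g (aw w x * x)) ys) = P (\<phi> w)"
      by (simp add: P_def \<phi>_def ys_def o_def)
    finally show ?thesis .
  qed
  have finU: "finite U" unfolding U_def using Ls_finite by auto
  have fib: "card {w\<in>R. \<phi> w = us} \<le> s ^ s" if us: "us \<in> \<phi> ` R" for us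
  proof -
    define C where "C = {cs. set cs \<subseteq> {1..s} \<and> length cs = length us}"
    define F where "F cs = set (map (\<lambda>(u, c). u div c) (zip us cs))" for cs
    have sub: "{w\<in>R. \<phi> w = us} \<subseteq> F ` C"
    proof
      fix w assume "w \<in> {w\<in>R. \<phi> w = us}"
      hence w: "w \<in> R" "\<phi> w = us" by auto
      define ys where "ys = sorted_list_of_set w"
      have ys: "set ys = w" "length ys = card w" using fin[OF w(1)] by (auto simp: ys_def)
      define cs where "cs = map (aw w) ys"
      have "cs \<in> C" using awP[OF w(1)] awle[OF w(1)] ys w(2)
        by (auto simp: C_def cs_def \<phi>_def ys_def)
      moreover have "F cs = w"
      proof -
        have "\<forall>x\<in>set ys. aw w x > 0" using awP[OF w(1)] ys by auto
        hence "map (\<lambda>(u, c). u div c) (zip (map (\<lambda>x. aw w x * x) ys) (map (aw w) ys)) = ys"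
          by (rule zip_div)
        thus ?thesis using w(2) ys by (simp add: F_def cs_def \<phi>_def ys_def)
      qed
      ultimately show "w \<in> F ` C" by blast
    qed
    have finC: "finite C" unfolding C_def by (rule finite_lists_length_eq) simp
    have "card {w\<in>R. \<phi> w = us} \<le> card (F ` C)" by (rule card_mono[OF _ sub]) (use finC in simp)
    also have "\<dots> \<le> card C" by (rule card_image_le[OF finC])
    also have "\<dots> = s ^ length us" unfolding C_def by (subst card_lists_length_eq) auto
    also have "\<dots> \<le> s ^ s"
    proof -
      obtain w where "w \<in> R" "us = \<phi> w" using us by blast
      hence "length us < s" using \<phi>U by (auto simp: U_def Ls_def)
      thus ?thesis using s2 by (intro power_increasing) auto
    qed
    finally show ?thesis .
  qed
  have sumU: "(\<Sum>us\<in>U. P us) = (\<Sum>r<s. Tf (1 / real s) r z)"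
  proof -
    have "(\<Sum>us\<in>U. P us) = (\<Sum>r<s. \<Sum>us\<in>Ls r z. P us)"
      unfolding U_def by (rule sum.UNION_disjoint) (simp, simp add: Ls_finite, auto simp: Ls_def)
    also have "\<dots> = (\<Sum>r<s. Tf (1 / real s) r z)"
      by (simp add: Tf_list P_def g_def[abs_def])
    finally show ?thesis .
  qed
  have "(\<Sum>w\<in>R. prod g w) \<le> (\<Sum>w\<in>R. real s ^ s * P (\<phi> w))" by (rule sum_mono) (rule Gle)
  also have "\<dots> = real s ^ s * (\<Sum>w\<in>R. P (\<phi> w))" by (simp add: sum_distrib_left)
  also have "(\<Sum>w\<in>R. P (\<phi> w)) \<le> real (s ^ s) * (\<Sum>us\<in>U. P us)"
  proof (rule sum_fiber_le)
    show "finite R" using Omega_finite by (simp add: R_def)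
    show "finite U" by (rule finU)
    show "\<phi> ` R \<subseteq> U" using \<phi>U by blast
    show "0 \<le> P b" for b unfolding P_def by (intro prod_list_map_nonneg) (simp add: g_def)
  qed (rule fib)
  finally show ?thesis unfolding sumU R_def g_def by (simp add: mult_left_mono)
qed

theorem lemma2:
  fixes s :: nat
  assumes "s \<ge> 2"
  shows "(\<lambda>z::nat. \<Sum>w\<in>Omega s z. PE s w) \<sim>[at_top] (\<lambda>_. lambda_s s)"
proof -
  have s2: "s \<ge> 2" by (rule assms)
  define \<alpha> where "\<alpha> = 1 / real s"
  have a0: "0 < \<alpha>" using s2 by (simp add: \<alpha>_def)
  have sa: "real s * \<alpha> = 1" using s2 by (simp add: \<alpha>_def)
  define g where "g x = real x powr (1 / real s - 1)" for x :: nat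
  define D where "D z = {w\<in>Omega s z. card w = s}" for z
  define R where "R z = {w\<in>Omega s z. card w \<noteq> s}" for z
  define Q where "Q z = (\<Sum>w\<in>R z. prod g w)" for z
  define DLs where "DLs z = (\<Sum>xs\<in>{xs\<in>Ls s z. distinct xs}. prod_list (map g xs))" for z
  define NLs where "NLs z = (\<Sum>xs\<in>{xs\<in>Ls s z. \<not> distinct xs}. prod_list (map g xs))" for z
  define c0 where "c0 = (1 / real s) ^ s / fact s"
  define S where "S z = (\<Sum>w\<in>Omega s z. PE s w)" for z
  define K where "K = real (s ^ s) * real (s ^ s)"
  have c0pos: "c0 > 0" using s2 by (simp add: c0_def)
  have gnn: "0 \<le> prod g w" for w by (intro prod_nonneg) (simp add: g_def)
  have Qnn: "Q z \<ge> 0" for z unfolding Q_def by (intro sum_nonneg gnn)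
  have NLnn: "NLs z \<ge> 0" for z unfolding NLs_def by (intro sum_nonneg prod_list_map_nonneg) (simp add: g_def)
  have Sdecomp: "S z = c0 * DLs z + (\<Sum>w\<in>R z. PE s w)" for z
  proof -
    have "Omega s z = D z \<union> R z" by (auto simp: D_def R_def)
    hence "S z = (\<Sum>w\<in>D z. PE s w) + (\<Sum>w\<in>R z. PE s w)"
      unfolding S_def using Omega_finite[of s z] by (simp add: D_def R_def sum.union_disjoint)
         (subst sum.union_disjoint[symmetric], auto intro: arg_cong2[where f=sum])
    moreover have "(\<Sum>w\<in>D z. PE s w) = c0 * DLs z"
    proof -
      have "(\<Sum>w\<in>D z. PE s w) = (\<Sum>w\<in>D z. (1 / real s) ^ s * prod g w)"
        by (intro sum.cong refl) (auto simp: D_def PE_eq Omega_def g_def[abs_def])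
      also have "\<dots> = (1 / real s) ^ s * (\<Sum>w\<in>D z. prod g w)" by (simp add: sum_distrib_left)
      also have "DLs z = fact s * (\<Sum>w\<in>D z. prod g w)" unfolding DLs_def D_def by (rule DL_sum)
      hence "(\<Sum>w\<in>D z. prod g w) = DLs z / fact s" by simp
      finally show ?thesis by (simp add: c0_def)
    qed
    ultimately show ?thesis by simp
  qed
  have Rbound: "0 \<le> (\<Sum>w\<in>R z. PE s w) \<and> (\<Sum>w\<in>R z. PE s w) \<le> Q z" for z
  proof -
    have "PE s w \<le> prod g w \<and> 0 \<le> PE s w" if "w \<in> R z" for w
    proof -
      have fw: "finite w" using that by (auto simp: R_def Omega_def)
      have "(1 / real s) ^ card w \<le> 1" using s2 by (intro power_le_one) auto
      hence "(1 / real s) ^ card w * prod g w \<le> 1 * prod g w" by (intro mult_right_mono gnn)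
      moreover have "0 \<le> (1 / real s) ^ card w * prod g w" by (intro mult_nonneg_nonneg gnn) simp
      ultimately show ?thesis using fw by (simp add: PE_eq g_def[abs_def])
    qed
    thus ?thesis unfolding Q_def by (auto intro!: sum_mono sum_nonneg)
  qed
  have Tdecomp: "Tf \<alpha> s z = DLs z + NLs z" for z
  proof -
    have "Ls s z = {xs\<in>Ls s z. distinct xs} \<union> {xs\<in>Ls s z. \<not> distinct xs}" by auto
    hence "Tf \<alpha> s z = (\<Sum>xs\<in>{xs\<in>Ls s z. distinct xs} \<union> {xs\<in>Ls s z. \<not> distinct xs}. prod_list (map g xs))"
      by (simp add: Tf_list \<alpha>_def g_def[abs_def])
    also have "\<dots> = DLs z + NLs z" unfolding DLs_def NLs_def
      by (rule sum.union_disjoint) (auto intro: finite_subset[OF _ Ls_finite])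
    finally show ?thesis .
  qed
  have NLb: "NLs z \<le> real (s ^ s) * Q z" for z
    using NL_bound[of s z] s2 unfolding NLs_def Q_def R_def g_def[abs_def] by simp
  have Qb: "Q z \<le> K * (\<Sum>r<s. Tf \<alpha> r z)" for z
    using Q_bound[OF s2, of z] unfolding Q_def R_def g_def[abs_def] K_def \<alpha>_def by (simp add: mult.assoc)
  have LT: "(\<lambda>z. Tf \<alpha> s z) \<longlonglongrightarrow> Gamma \<alpha> ^ s"
  proof -
    have L: "(\<lambda>z. Tf \<alpha> s z / real z powr (real s * \<alpha> - 1)) \<longlonglongrightarrow> Gamma \<alpha> ^ s / Gamma (real s * \<alpha>)"
      by (rule Tf_lim[OF a0]) (use s2 sa in auto)
    have ev: "\<forall>\<^sub>F z in sequentially. Tf \<alpha> s z / real z powr (real s * \<alpha> - 1) = Tf \<alpha> s z"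
      using eventually_ge_at_top[of "1::nat"] by eventually_elim (simp add: sa)
    show ?thesis using Lim_transform_eventually[OF L ev] sa by simp
  qed
  have LQ: "Q \<longlonglongrightarrow> 0"
  proof (rule tendsto_sandwich[OF _ _ tendsto_const])
    show "\<forall>\<^sub>F z in sequentially. 0 \<le> Q z" using Qnn by simp
    show "\<forall>\<^sub>F z in sequentially. Q z \<le> K * (\<Sum>r<s. Tf \<alpha> r z)" using Qb by simp
    have "(\<lambda>z. \<Sum>r<s. Tf \<alpha> r z) \<longlonglongrightarrow> (\<Sum>r<s. 0)"
      by (intro tendsto_sum Tf_small[OF a0 _ , of _ s]) (use sa in auto)
    thus "(\<lambda>z. K * (\<Sum>r<s. Tf \<alpha> r z)) \<longlonglongrightarrow> 0"
      using tendsto_mult[OF tendsto_const[of K]] by fastforce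
  qed
  have lim: "S \<longlonglongrightarrow> c0 * Gamma \<alpha> ^ s"
  proof (rule tendsto_sandwich)
    show "\<forall>\<^sub>F z in sequentially. c0 * (Tf \<alpha> s z - real (s ^ s) * Q z) \<le> S z"
    proof (intro always_eventually allI)
      fix z
      have "Tf \<alpha> s z - real (s ^ s) * Q z \<le> DLs z" using Tdecomp[of z] NLb[of z] by simp
      hence "c0 * (Tf \<alpha> s z - real (s ^ s) * Q z) \<le> c0 * DLs z" using c0pos by simp
      thus "c0 * (Tf \<alpha> s z - real (s ^ s) * Q z) \<le> S z" using Sdecomp[of z] Rbound[of z] by simp
    qed
    show "\<forall>\<^sub>F z in sequentially. S z \<le> c0 * Tf \<alpha> s z + Q z"
    proof (intro always_eventually allI)
      fix z
      have "DLs z \<le> Tf \<alpha> s z" using Tdecomp[of z] NLnn[of z] by simp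
      hence "c0 * DLs z \<le> c0 * Tf \<alpha> s z" using c0pos by simp
      thus "S z \<le> c0 * Tf \<alpha> s z + Q z" using Sdecomp[of z] Rbound[of z] by simp
    qed
    show "(\<lambda>z. c0 * (Tf \<alpha> s z - real (s ^ s) * Q z)) \<longlonglongrightarrow> c0 * Gamma \<alpha> ^ s"
      using tendsto_mult[OF tendsto_const[of c0] tendsto_diff[OF LT tendsto_mult[OF tendsto_const[of "real (s^s)"] LQ]]]
      by simp
    show "(\<lambda>z. c0 * Tf \<alpha> s z + Q z) \<longlonglongrightarrow> c0 * Gamma \<alpha> ^ s"
      using tendsto_add[OF tendsto_mult[OF tendsto_const[of c0] LT] LQ] by simp
  qed
  have lam: "c0 * Gamma \<alpha> ^ s = lambda_s s"
    unfolding lambda_s_def c0_def \<alpha>_def by (simp add: field_simps power_divide)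
  have lam0: "lambda_s s \<noteq> 0"
    using lam c0pos Gamma_real_pos[OF a0] by (metis less_irrefl mult_pos_pos zero_less_power)
  show ?thesis
    using tendsto_imp_asymp_equiv_const[OF lim[unfolded lam] lam0] unfolding S_def by simp
qed

end
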